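(* Let $p$ be an odd prime. If $n>m$ and $n-m$ is divisible by $2p-2$, then $$\frac{\Phi_n}{\Phi_m}\equiv\Phi_{n-m}\pmod{p^{1+\nu_p(n-m)}},$$ i.e. $\Phi_n/\Phi_m-\Phi_{n-m}\in p^{1+\nu_p(n-m)}A$, where $\nu_p$ denotes the $p$-adic valuation.
   Context: $A$ is the ring of degree zero stable operations in $p$-local complex $K$-theory. Fix $q$ primitive mod $p^2$, $\Psi^q\in A$ the Adams operation, $q_i=q^{(-1)^i\lfloor i/2\rfloor}$ for $i\ge1$, $\Theta_n(X)=\prod_{i=1}^n(X-q_i)$, and $\Phi_n=\Theta_n(\Psi^q)\in A$. For $n>m$, $\Theta_m(X)$ divides $\Theta_n(X)$, and $\Phi_n/\Phi_m$ denotes the value at $\Psi^q$ of the polynomial $\Theta_n(X)/\Theta_m(X)$. *)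

theory Defs
  imports "HOL-Number_Theory.Number_Theory" "HOL-Computational_Algebra.Polynomial"
begin

definition in_Zp :: "nat \<Rightarrow> rat \<Rightarrow> bool" where
  "in_Zp p r \<longleftrightarrow> (\<exists>a b :: int. b \<noteq> 0 \<and> \<not> int p dvd b \<and> r = of_int a / of_int b)"

(* A Laurent polynomial w^(-N) g(w) in Q[w,w^-1], represented by (g, N), evaluated at x *)
definition lev :: "rat poly \<Rightarrow> nat \<Rightarrow> rat \<Rightarrow> rat" where
  "lev g N x = poly g x / x ^ N"

(* K_0(K)_(p): Laurent polynomials f with f(k) in Z_(p) for all integers k prime to p
   (Adams-Harris-Switzer, localized at p) *)
definition K0K :: "nat \<Rightarrow> (rat poly \<times> nat) set" where
  "K0K p = {(g, N). \<forall>k::int. \<not> int p dvd k \<longrightarrow> in_Zp p (lev g N (of_int k))}"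

(* The operation P(Psi^q) in A = Hom(K_0(K)_(p), Z_(p)) acts as the functional
   f \<mapsto> \<Sum>_i c_i f(q^i), since Psi^(q^i) is evaluation at q^i. *)
definition act :: "int \<Rightarrow> rat poly \<Rightarrow> rat poly \<times> nat \<Rightarrow> rat" where
  "act q P f = (\<Sum>i\<le>degree P. coeff P i * lev (fst f) (snd f) (of_int q ^ i))"

definition in_pkA :: "nat \<Rightarrow> nat \<Rightarrow> int \<Rightarrow> rat poly \<Rightarrow> bool" where
  "in_pkA p k q P \<longleftrightarrow> (\<forall>f \<in> K0K p. in_Zp p (act q P f / of_nat p ^ k))"

definition qi :: "int \<Rightarrow> nat \<Rightarrow> rat" where
  "qi q i = (if even i then of_int q ^ (i div 2) else inverse (of_int q ^ (i div 2)))"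

definition Theta :: "int \<Rightarrow> nat \<Rightarrow> rat poly" where
  "Theta q n = (\<Prod>i\<in>{1..n}. [:- qi q i, 1:])"

definition primitive_mod :: "nat \<Rightarrow> int \<Rightarrow> bool" where
  "primitive_mod m q \<longleftrightarrow> residue_primroot m (nat (q mod int m))"

end

theory Submission
  imports Defs
begin

lemma Zp_int: "prime p \<Longrightarrow> in_Zp p (of_int a)"
  unfolding in_Zp_def by (rule exI[of _ a], rule exI[of _ 1]) (auto simp: prime_nat_iff)

lemma Zp_nat: "prime p \<Longrightarrow> in_Zp p (of_nat a)"
  using Zp_int[of p "int a"] by simp

lemma Zp_add:
  assumes "prime p" "in_Zp p x" "in_Zp p y" shows "in_Zp p (x + y)"
proof -
  obtain a b where ab: "b \<noteq> 0" "\<not> int p dvd b" "x = of_int a / of_int b" using assms(2) unfolding in_Zp_def by blast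
  obtain c d where cd: "d \<noteq> 0" "\<not> int p dvd d" "y = of_int c / of_int d" using assms(3) unfolding in_Zp_def by blast
  have "prime (int p)" using assms(1) by simp
  then have "\<not> int p dvd b * d" using ab cd prime_dvd_mult_iff by blast
  moreover have "x + y = of_int (a*d + c*b) / of_int (b*d)" using ab cd by (simp add: field_simps)
  ultimately show ?thesis unfolding in_Zp_def using ab cd by (intro exI[of _ "a*d+c*b"] exI[of _ "b*d"]) auto
qed

lemma Zp_mult:
  assumes "prime p" "in_Zp p x" "in_Zp p y" shows "in_Zp p (x * y)"
proof -
  obtain a b where ab: "b \<noteq> 0" "\<not> int p dvd b" "x = of_int a / of_int b" using assms(2) unfolding in_Zp_def by blast
  obtain c d where cd: "d \<noteq> 0" "\<not> int p dvd d" "y = of_int c / of_int d" using assms(3) unfolding in_Zp_def by blast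
  have "prime (int p)" using assms(1) by simp
  then have "\<not> int p dvd b * d" using ab cd prime_dvd_mult_iff by blast
  moreover have "x * y = of_int (a*c) / of_int (b*d)" using ab cd by (simp add: field_simps)
  ultimately show ?thesis unfolding in_Zp_def using ab cd by (intro exI[of _ "a*c"] exI[of _ "b*d"]) auto
qed

lemma Zp_uminus: "in_Zp p x \<Longrightarrow> in_Zp p (- x)"
  unfolding in_Zp_def by (metis minus_divide_left of_int_minus)

lemma Zp_diff: "prime p \<Longrightarrow> in_Zp p x \<Longrightarrow> in_Zp p y \<Longrightarrow> in_Zp p (x - y)"
  using Zp_add[of p x "- y"] Zp_uminus[of p y] by simp

lemma Zp_inv: "\<not> int p dvd b \<Longrightarrow> in_Zp p (inverse (of_int b))"
  unfolding in_Zp_def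
  by (rule exI[of _ 1], rule exI[of _ b]) (auto simp: divide_inverse)

lemma Zp_sum: "prime p \<Longrightarrow> (\<And>i. i \<in> S \<Longrightarrow> in_Zp p (f i)) \<Longrightarrow> in_Zp p (sum f S)"
proof (induction S rule: infinite_finite_induct)
  case (infinite A) then show ?case using Zp_int[of p 0] by simp
next
  case empty then show ?case using Zp_int[of p 0] by simp
next
  case (insert x F) then show ?case by (simp add: Zp_add)
qed

definition zpoly :: "nat \<Rightarrow> rat poly \<Rightarrow> bool" where
  "zpoly p P \<longleftrightarrow> (\<forall>i. in_Zp p (coeff P i))"

lemma zpoly_mult: "prime p \<Longrightarrow> zpoly p P \<Longrightarrow> zpoly p Q \<Longrightarrow> zpoly p (P * Q)"
  unfolding zpoly_def coeff_mult by (auto intro!: Zp_sum Zp_mult)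

lemma zpoly_one: "prime p \<Longrightarrow> zpoly p 1"
  unfolding zpoly_def coeff_1 using Zp_int[of p 1] Zp_int[of p 0] by auto

lemma zpoly_prod: "prime p \<Longrightarrow> (\<And>i. i \<in> S \<Longrightarrow> zpoly p (f i)) \<Longrightarrow> zpoly p (prod f S)"
proof (induction S rule: infinite_finite_induct)
  case (infinite A) then show ?case using zpoly_one by simp
next
  case empty then show ?case using zpoly_one by simp
next
  case (insert x F) then show ?case by (simp add: zpoly_mult)
qed

lemma zpoly_lin: "prime p \<Longrightarrow> in_Zp p a \<Longrightarrow> zpoly p [:- a, 1:]"
  unfolding zpoly_def using Zp_int[of p 1] Zp_int[of p 0] Zp_uminus[of p a]
  by (auto simp: coeff_pCons split: nat.split)


definition dpoly :: "nat \<Rightarrow> nat \<Rightarrow> rat poly \<Rightarrow> bool" where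
  "dpoly p k P \<longleftrightarrow> (\<forall>i. in_Zp p (coeff P i / of_nat p ^ k))"

lemma dpoly_add: "prime p \<Longrightarrow> dpoly p k P \<Longrightarrow> dpoly p k Q \<Longrightarrow> dpoly p k (P + Q)"
  unfolding dpoly_def by (auto simp: add_divide_distrib intro!: Zp_add)

lemma dpoly_0: "prime p \<Longrightarrow> dpoly p k 0"
  unfolding dpoly_def using Zp_int[of p 0] by simp

lemma dpoly_smult: "prime p \<Longrightarrow> in_Zp p (c / of_nat p ^ k) \<Longrightarrow> zpoly p G \<Longrightarrow> dpoly p k (smult c G)"
  unfolding dpoly_def zpoly_def
proof (intro allI)
  fix i assume "prime p" "in_Zp p (c / of_nat p ^ k)" "\<forall>i. in_Zp p (coeff G i)"
  then have "in_Zp p ((c / of_nat p ^ k) * coeff G i)" by (intro Zp_mult) auto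
  then show "in_Zp p (coeff (smult c G) i / of_nat p ^ k)" by simp
qed

lemma Zp_qpow: "prime p \<Longrightarrow> \<not> int p dvd q \<Longrightarrow> \<not> int p dvd q ^ j"
  by (metis prime_dvd_power prime_nat_int_transfer)

lemma Zp_qi: "prime p \<Longrightarrow> \<not> int p dvd q \<Longrightarrow> in_Zp p (qi q i)"
  unfolding qi_def using Zp_int[of p "q ^ (i div 2)"] Zp_inv[of p "q ^ (i div 2)"] Zp_qpow[of p q "i div 2"]
  by auto

lemma act_ok:
  assumes "prime p" "\<not> int p dvd q" "dpoly p k P"
  shows "in_pkA p k q P"
  unfolding in_pkA_def
proof
  fix f assume f: "f \<in> K0K p"
  obtain g N where gN: "f = (g, N)" by (cases f)
  have lv: "in_Zp p (lev g N (of_int q ^ i))" for i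
    using f gN Zp_qpow[OF assms(1,2), of i] unfolding K0K_def by (auto simp del: of_int_power simp add: of_int_power[symmetric])
  have "act q P f / of_nat p ^ k = (\<Sum>i\<le>degree P. (coeff P i / of_nat p ^ k) * lev g N (of_int q ^ i))"
    unfolding act_def gN by (simp add: sum_divide_distrib)
  also have "in_Zp p \<dots>"
    using assms(3) lv unfolding dpoly_def by (intro Zp_sum Zp_mult assms(1)) auto
  finally show "in_Zp p (act q P f / of_nat p ^ k)" .
qed

lemma qi_shift:
  assumes "prime p" "\<not> int p dvd q" "int p ^ k dvd q ^ h - 1"
  shows "in_Zp p ((qi q i - qi q (i + 2 * h)) / of_nat p ^ k)"
proof -
  obtain t where t: "q ^ h - 1 = int p ^ k * t" using assms(3) by blast
  have q0: "q \<noteq> 0" using assms(2) by auto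
  have pk: "(of_nat p ^ k :: rat) \<noteq> 0" using assms(1) by (simp add: prime_gt_0_nat)
  have th: "(of_int q ^ h - 1 :: rat) = of_nat p ^ k * of_int t"
    using arg_cong[OF t, of "of_int :: int \<Rightarrow> rat"] by simp
  have Q: "in_Zp p (of_int q ^ j)" for j using Zp_int[OF assms(1), of "q ^ j"] by simp
  have Qi: "in_Zp p (inverse (of_int q ^ j))" for j
    using Zp_inv[OF Zp_qpow[OF assms(1,2), of j]] by simp
  have T: "in_Zp p (of_int t)" using Zp_int[OF assms(1)] .
  show ?thesis
  proof (cases "even i")
    case True
    then have "(qi q i - qi q (i + 2 * h)) / of_nat p ^ k = - (of_int q ^ (i div 2) * of_int t)"
    proof -
      have e: "even (i + 2 * h)" "(i + 2 * h) div 2 = i div 2 + h" using True by auto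
      have "qi q i - qi q (i + 2 * h) = - (of_int q ^ (i div 2) * (of_int q ^ h - 1))"
        unfolding qi_def using True e by (simp add: power_add algebra_simps)
      also have "\<dots> = - (of_int q ^ (i div 2) * of_int t) * of_nat p ^ k" unfolding th by simp
      finally show ?thesis using pk by simp
    qed
    then show ?thesis using Q T by (simp add: Zp_uminus Zp_mult assms(1))
  next
    case False
    then have "(qi q i - qi q (i + 2 * h)) / of_nat p ^ k = inverse (of_int q ^ (i div 2)) * inverse (of_int q ^ h) * of_int t"
    proof -
      have e: "odd (i + 2 * h)" "(i + 2 * h) div 2 = i div 2 + h" using False by auto
      have "qi q i - qi q (i + 2 * h) = inverse (of_int q ^ (i div 2)) * inverse (of_int q ^ h) * (of_int q ^ h - 1)"
        unfolding qi_def using False e q0 by (simp add: power_add field_simps)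
      also have "\<dots> = inverse (of_int q ^ (i div 2)) * inverse (of_int q ^ h) * of_int t * of_nat p ^ k" unfolding th by simp
      finally show ?thesis using pk by simp
    qed
    then show ?thesis using Qi T by (simp add: Zp_mult assms(1))
  qed
qed


lemma R_diff:
  assumes "prime p" "\<not> int p dvd q" "int p ^ k dvd q ^ h - 1" "d = 2 * h" "h \<ge> 1"
  shows "dpoly p k ((\<Prod>i\<in>{m+1..m+d}. [:- qi q i, 1:]) - (\<Prod>i\<in>{1..d}. [:- qi q i, 1:]))"
proof (induction m)
  case 0 then show ?case using dpoly_0[OF assms(1)] by simp
next
  case (Suc m)
  define G where "G = (\<Prod>i\<in>{m+2..m+d}. [:- qi q i, 1:])"
  have s1: "{Suc m+1..Suc m+d} = insert (m+1+d) {m+2..m+d}" using assms(4,5) by auto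
  have s2: "{m+1..m+d} = insert (m+1) {m+2..m+d}" using assms(4,5) by auto
  have "(\<Prod>i\<in>{Suc m+1..Suc m+d}. [:- qi q i, 1:]) - (\<Prod>i\<in>{m+1..m+d}. [:- qi q i, 1:])
     = ([:- qi q (m+1+d), 1:] - [:- qi q (m+1), 1:]) * G"
    unfolding s1 s2 G_def by (simp add: algebra_simps del: smult_diff_left add: smult_diff_left[symmetric])
  also have "\<dots> = smult (qi q (m+1) - qi q (m+1+d)) G" proof -
    have "[:- qi q (m+1+d), 1:] - [:- qi q (m+1), 1:] = [:qi q (m+1) - qi q (m+1+d):]" by simp
    then show ?thesis by simp
  qed
  finally have eq: "(\<Prod>i\<in>{Suc m+1..Suc m+d}. [:- qi q i, 1:]) - (\<Prod>i\<in>{m+1..m+d}. [:- qi q i, 1:])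
     = smult (qi q (m+1) - qi q (m+1+d)) G" .
  have zG: "zpoly p G" unfolding G_def
    by (intro zpoly_prod zpoly_lin Zp_qi assms(1,2))
  have "dpoly p k (smult (qi q (m+1) - qi q (m+1+d)) G)"
    using qi_shift[OF assms(1,2,3), of "m+1"] assms(4) zG by (intro dpoly_smult assms(1)) auto
  then have "dpoly p k (((\<Prod>i\<in>{Suc m+1..Suc m+d}. [:- qi q i, 1:]) - (\<Prod>i\<in>{m+1..m+d}. [:- qi q i, 1:]))
     + ((\<Prod>i\<in>{m+1..m+d}. [:- qi q i, 1:]) - (\<Prod>i\<in>{1..d}. [:- qi q i, 1:])))"
    using Suc eq by (intro dpoly_add assms(1)) auto
  then show ?case by simp
qed


lemma q_pow:
  assumes "prime p" "\<not> int p dvd q" "totient (p ^ k) dvd h" "k \<ge> 1"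
  shows "int p ^ k dvd q ^ h - 1"
proof -
  have p1: "p > 1" using assms(1) prime_gt_1_nat by blast
  have "p ^ k > 1" using p1 assms(4) by (metis One_nat_def not_one_le_zero one_less_power neq0_conv)
  then have "int (p ^ k) > 1" by linarith
  then have res: "residues (int (p ^ k))" unfolding residues_def .
  have "prime (int p)" using assms(1) by simp
  then have "coprime (int p) q" using assms(2) by (rule prime_imp_coprime)
  then have "coprime q (int p ^ k)" by (simp add: coprime_commute)
  then have cq: "coprime q (int (p ^ k))" by simp
  have e: "[q ^ totient (nat (int (p ^ k))) = 1] (mod int (p ^ k))"
    by (rule residues.euler_theorem[OF res cq])
  then have e: "[q ^ totient (p ^ k) = 1] (mod int (p ^ k))" by (simp only: nat_int)
  obtain j where j: "h = totient (p ^ k) * j" using assms(3) by blast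
  have "[(q ^ totient (p ^ k)) ^ j = 1 ^ j] (mod int (p ^ k))" by (rule cong_pow[OF e])
  then have "[q ^ h = 1] (mod int (p ^ k))" by (simp only: j power_mult power_one)
  then have "int (p ^ k) dvd q ^ h - 1" by (simp only: cong_iff_dvd_diff)
  then show ?thesis by simp
qed

lemma Theta_split:
  assumes "m \<le> n"
  shows "Theta q n = Theta q m * (\<Prod>i\<in>{m+1..n}. [:- qi q i, 1:])"
proof -
  have "{1..n} = {1..m} \<union> {m+1..n}" using assms by auto
  then show ?thesis unfolding Theta_def by (simp add: prod.union_disjoint)
qed

lemma Theta_nz: "Theta q m \<noteq> 0"
  unfolding Theta_def by (simp add: prod_zero_iff)

theorem lemma3p7:
  fixes p n m :: nat and q :: int
  assumes "prime p" and "odd p"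
    and "primitive_mod (p ^ 2) q"
    and "n > m"
    and "(2 * p - 2) dvd (n - m)"
  shows "in_pkA p (1 + multiplicity p (n - m)) q (Theta q n div Theta q m - Theta q (n - m))"
proof -
  define d where "d = n - m"
  define v where "v = multiplicity p d"
  have p1: "p > 2" using assms(1,2) prime_ge_2_nat
    by (metis dvd_refl le_neq_implies_less)
  have nq: "\<not> int p dvd q"
  proof
    assume pq: "int p dvd q"
    have cp: "coprime (p ^ 2) (nat (q mod int (p ^ 2)))"
      using assms(3) unfolding primitive_mod_def residue_primroot_def by simp
    have "int p dvd q mod int (p ^ 2)" using pq
      by (simp add: dvd_mod_iff)
    then have "p dvd nat (q mod int (p ^ 2))"
    proof -
      have "q mod int (p ^ 2) \<ge> 0" using p1 by simp
      then have "int (nat (q mod int (p ^ 2))) = q mod int (p ^ 2)" by simp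
      with \<open>int p dvd q mod int (p ^ 2)\<close> have "int p dvd int (nat (q mod int (p ^ 2)))" by simp
      then show ?thesis by (simp only: int_dvd_int_iff)
    qed
    moreover have "p dvd p ^ 2" by simp
    ultimately have "p dvd 1" using cp by (meson coprime_common_divisor)
    then show False using p1 by simp
  qed
  obtain c where c: "d = (2 * p - 2) * c" using assms(5) d_def by blast
  have d0: "d > 0" using assms(4) d_def by simp
  then have c0: "c \<ge> 1" using c by (cases c) auto
  define h where "h = (p - 1) * c"
  have dh: "d = 2 * h" unfolding h_def c by (simp add: algebra_simps)
  have h1: "h \<ge> 1" using c0 p1 unfolding h_def by simp
  have pvd: "p ^ v dvd d" unfolding v_def by (rule multiplicity_dvd)
  have "coprime p (2 * p - 2)"
  proof (rule prime_imp_coprime[OF assms(1)], rule notI)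
    assume "p dvd 2 * p - 2"
    moreover have "2 * p - 2 = 2 * (p - 1)" by simp
    ultimately have "p dvd 2 \<or> p dvd p - 1" using assms(1) prime_dvd_mult_iff by metis
    then show False using p1 by (auto dest: dvd_imp_le)
  qed
  then have "coprime (p ^ v) (2 * p - 2)" by simp
  then have pvc: "p ^ v dvd c" using pvd c coprime_dvd_mult_right_iff by metis
  have "totient (p ^ Suc v) = p ^ v * (p - 1)" by (rule totient_prime_power_Suc[OF assms(1)])
  then have "totient (p ^ (1 + v)) dvd h" unfolding h_def using pvc by (simp add: mult.commute mult_dvd_mono)
  then have qh: "int p ^ (1 + v) dvd q ^ h - 1"
    using q_pow[OF assms(1) nq, of "1 + v" h] by simp
  have R: "dpoly p (1 + v) ((\<Prod>i\<in>{m+1..m+d}. [:- qi q i, 1:]) - (\<Prod>i\<in>{1..d}. [:- qi q i, 1:]))"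
    by (rule R_diff[OF assms(1) nq qh dh h1])
  have md: "m + d = n" using d_def assms(4) by simp
  have "Theta q n div Theta q m = (\<Prod>i\<in>{m+1..m+d}. [:- qi q i, 1:])"
    unfolding md Theta_split[of m n q, OF less_imp_le[OF assms(4)]] using Theta_nz[of q m] by simp
  moreover have "Theta q (n - m) = (\<Prod>i\<in>{1..d}. [:- qi q i, 1:])" unfolding Theta_def d_def ..
  ultimately show ?thesis using act_ok[OF assms(1) nq] R unfolding d_def v_def by simp
qed

end
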